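(* For every nonempty graph $G$, \[\hat r(\nu(G)K_2,G)\le \hat r(G,G),\qquad\text{and consequently}\qquad \hat r_\infty(G)\le \frac{\hat r(G,G)}{\nu(G)\,|E(G)|}.\]
   Context: All graphs are finite and simple; a graph is nonempty if it has at least one edge. $\nu(G)$ is the maximum size of a matching in $G$; $tK_2$ is a matching with $t$ edges. For graphs $F,G,H$, $F\to(G,H)$ means every red--blue coloring of $E(F)$ contains a red copy of $G$ or a blue copy of $H$, and $\hat r(G,H)=\min\{|E(F)|:F\to(G,H)\}$. For a nonempty graph $G$, $\hat r_\infty(G)=\lim_{t\to\infty}\frac{\hat r(tK_2,G)}{t\,|E(G)|}$ (this limit exists). *)

theory Defs
  imports Complex_Main
begin

type_synonym 'a graph = "'a set \<times> 'a set set"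

definition verts :: "'a graph \<Rightarrow> 'a set" where "verts G = fst G"
definition edges :: "'a graph \<Rightarrow> 'a set set" where "edges G = snd G"

definition is_graph :: "'a graph \<Rightarrow> bool" where
  "is_graph G \<longleftrightarrow> finite (verts G) \<and>
     (\<forall>e\<in>edges G. \<exists>u v. u \<in> verts G \<and> v \<in> verts G \<and> u \<noteq> v \<and> e = {u, v})"

definition contains_copy :: "'b graph \<Rightarrow> 'a graph \<Rightarrow> bool" where
  "contains_copy F H \<longleftrightarrow> (\<exists>f. inj_on f (verts H) \<and> f ` verts H \<subseteq> verts F \<and>
     (\<forall>e\<in>edges H. f ` e \<in> edges F))"

text \<open>F \<rightarrow> (G, H): every red/blue colouring (red edge set R) of E(F) contains a red
  copy of G or a blue copy of H.\<close>
definition arrows :: "'c graph \<Rightarrow> 'a graph \<Rightarrow> 'b graph \<Rightarrow> bool" where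
  "arrows F G H \<longleftrightarrow> (\<forall>R \<subseteq> edges F.
      contains_copy (verts F, R) G \<or> contains_copy (verts F, edges F - R) H)"

text \<open>Size Ramsey number; host graphs are taken on natural-number vertices
  (no loss of generality, since host graphs are finite).\<close>
definition size_ramsey :: "'a graph \<Rightarrow> 'b graph \<Rightarrow> nat" where
  "size_ramsey G H = (LEAST m. \<exists>F :: nat graph. is_graph F \<and> card (edges F) = m \<and> arrows F G H)"

definition matching_graph :: "nat \<Rightarrow> nat graph" where
  "matching_graph t = ({..<2*t}, {{2*i, 2*i+1} | i. i < t})"

definition is_matching :: "'a graph \<Rightarrow> 'a set set \<Rightarrow> bool" where
  "is_matching G M \<longleftrightarrow> M \<subseteq> edges G \<and> (\<forall>e\<in>M. \<forall>e'\<in>M. e \<noteq> e' \<longrightarrow> e \<inter> e' = {})"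

definition matching_number :: "'a graph \<Rightarrow> nat" where
  "matching_number G = Max (card ` {M. is_matching G M})"

definition size_ramsey_infty :: "'a graph \<Rightarrow> real" where
  "size_ramsey_infty G =
     lim (\<lambda>t. real (size_ramsey (matching_graph t) G) / (real t * real (card (edges G))))"

end

theory Submission
  imports Defs "HOL-Library.Ramsey"
begin

lemma contains_copy_trans:
  assumes "contains_copy A B" "contains_copy B C" shows "contains_copy A C"
proof -
  obtain f where f: "inj_on f (verts B)" "f ` verts B \<subseteq> verts A" "\<forall>e\<in>edges B. f ` e \<in> edges A"
    using assms(1) unfolding contains_copy_def by blast
  obtain g where g: "inj_on g (verts C)" "g ` verts C \<subseteq> verts B" "\<forall>e\<in>edges C. g ` e \<in> edges B"
    using assms(2) unfolding contains_copy_def by blast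
  have "inj_on (f \<circ> g) (verts C)" using f(1) g(1,2) by (simp add: comp_inj_on inj_on_subset)
  moreover have "(f \<circ> g) ` verts C \<subseteq> verts A" using f g by (auto simp: image_subset_iff)
  moreover have "\<forall>e\<in>edges C. (f \<circ> g) ` e \<in> edges A"
  proof
    fix e assume "e \<in> edges C"
    then have "g ` e \<in> edges B" using g by blast
    then have "f ` (g ` e) \<in> edges A" using f by blast
    then show "(f \<circ> g) ` e \<in> edges A" by (simp add: image_comp)
  qed
  ultimately show ?thesis unfolding contains_copy_def by (intro exI[of _ "f \<circ> g"]) blast
qed

lemma contains_copy_mono:
  assumes "contains_copy (V,E) H" "V \<subseteq> V'" "E \<subseteq> E'" shows "contains_copy (V',E') H"
proof -
  obtain f where f: "inj_on f (verts H)" "f ` verts H \<subseteq> V" "\<forall>e\<in>edges H. f ` e \<in> E"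
    using assms(1) unfolding contains_copy_def verts_def edges_def by auto
  then show ?thesis using assms(2,3) unfolding contains_copy_def by (intro exI[of _ f]) (auto simp: verts_def edges_def)
qed

lemma finite_edges: assumes "is_graph G" shows "finite (edges G)"
proof -
  have "edges G \<subseteq> Pow (verts G)"
  proof
    fix e assume "e \<in> edges G"
    then obtain u v where "u \<in> verts G" "v \<in> verts G" "e = {u, v}" using assms unfolding is_graph_def by blast
    then show "e \<in> Pow (verts G)" by auto
  qed
  moreover have "finite (verts G)" using assms unfolding is_graph_def by blast
  ultimately show ?thesis using finite_Pow_iff finite_subset by metis
qed

lemma matchings_finite: assumes "is_graph G" shows "finite {M. is_matching G M}"
proof -
  have "{M. is_matching G M} \<subseteq> Pow (edges G)" unfolding is_matching_def by blast
  moreover have "finite (Pow (edges G))" using finite_edges[OF assms] by simp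
  ultimately show ?thesis by (rule finite_subset)
qed

lemma matching_exists: assumes "is_graph G"
  shows "\<exists>M. is_matching G M \<and> card M = matching_number G"
proof -
  have "is_matching G {}" by (simp add: is_matching_def)
  then have ne: "{M. is_matching G M} \<noteq> {}" by blast
  have "matching_number G \<in> card ` {M. is_matching G M}"
    unfolding matching_number_def using matchings_finite[OF assms] ne by (intro Max_in) auto
  then show ?thesis by auto
qed

lemma matching_number_pos: assumes "is_graph G" "edges G \<noteq> {}" shows "matching_number G \<ge> 1"
proof -
  obtain e where e: "e \<in> edges G" using assms(2) by blast
  have "is_matching G {e}" using e unfolding is_matching_def by auto
  then have "card {e} \<in> card ` {M. is_matching G M}" by blast
  then have "card {e} \<le> matching_number G"
    unfolding matching_number_def using matchings_finite[OF assms(1)] by (intro Max_ge) auto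
  then show ?thesis by simp
qed

lemma matching_copy:
  assumes G: "is_graph G" and M: "is_matching G M"
  shows "contains_copy G (matching_graph (card M))"
proof -
  have fin: "finite M" using M finite_edges[OF G] unfolding is_matching_def using finite_subset by blast
  obtain g where g: "bij_betw g {0..<card M} M" using ex_bij_betw_nat_finite[OF fin] by blast
  have "\<forall>e\<in>edges G. \<exists>p. fst p \<in> verts G \<and> snd p \<in> verts G \<and> fst p \<noteq> snd p \<and> e = {fst p, snd p}"
    using G unfolding is_graph_def by fastforce
  then obtain p where p: "\<And>e. e \<in> edges G \<Longrightarrow> fst (p e) \<in> verts G \<and> snd (p e) \<in> verts G \<and> fst (p e) \<noteq> snd (p e) \<and> e = {fst (p e), snd (p e)}"
    by metis
  define a where "a e = fst (p e)" for e
  define b where "b e = snd (p e)" for e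
  have ab: "\<And>e. e \<in> M \<Longrightarrow> a e \<in> verts G \<and> b e \<in> verts G \<and> a e \<noteq> b e \<and> e = {a e, b e}"
    using p M unfolding a_def b_def is_matching_def by blast
  define h where "h k = (if even k then a (g (k div 2)) else b (g (k div 2)))" for k
  have gin: "\<And>i. i < card M \<Longrightarrow> g i \<in> M" using g by (auto simp: bij_betw_def)
  have abin: "\<And>e. e \<in> M \<Longrightarrow> a e \<in> e \<and> b e \<in> e" using ab by (metis insertI1 insert_commute)
  have hin: "\<And>k. k < 2 * card M \<Longrightarrow> h k \<in> g (k div 2)"
    using abin gin unfolding h_def by auto
  have "inj_on h {..<2 * card M}"
  proof
    fix j k assume j: "j \<in> {..<2 * card M}" and k: "k \<in> {..<2 * card M}" and eq: "h j = h k"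
    have jd: "j div 2 < card M" and kd: "k div 2 < card M" using j k by auto
    have same: "j div 2 = k div 2"
    proof (rule ccontr)
      assume ne: "j div 2 \<noteq> k div 2"
      then have "g (j div 2) \<noteq> g (k div 2)" using g jd kd by (auto simp: bij_betw_def inj_on_def)
      then have "g (j div 2) \<inter> g (k div 2) = {}" using M gin jd kd unfolding is_matching_def by blast
      moreover have "h j \<in> g (j div 2)" "h k \<in> g (k div 2)" using hin j k by auto
      ultimately show False using eq by auto
    qed
    have "even j = even k"
    proof (rule ccontr)
      assume "even j \<noteq> even k"
      then have "a (g (j div 2)) = b (g (j div 2))" using eq same unfolding h_def by (auto split: if_splits)
      then show False using ab gin jd by blast
    qed
    then have "j mod 2 = k mod 2" by (metis even_iff_mod_2_eq_zero odd_iff_mod_2_eq_one)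
    then show "j = k" using same by (metis div_mult_mod_eq)
  qed
  moreover have "h ` {..<2 * card M} \<subseteq> verts G"
    using ab gin unfolding h_def by auto
  moreover have "\<forall>e\<in>edges (matching_graph (card M)). h ` e \<in> edges G"
  proof
    fix e assume "e \<in> edges (matching_graph (card M))"
    then obtain i where i: "i < card M" "e = {2*i, 2*i+1}" unfolding matching_graph_def edges_def by auto
    have "h (2*i) = a (g i)" unfolding h_def by simp
    moreover have "h (2*i+1) = b (g i)" unfolding h_def by simp
    ultimately have "h ` e = {a (g i), b (g i)}" using i(2) by simp
    also have "\<dots> = g i" using ab gin i(1) by metis
    finally show "h ` e \<in> edges G" using gin i M unfolding is_matching_def by auto
  qed
  moreover have "verts (matching_graph (card M)) = {..<2 * card M}" by (simp add: matching_graph_def verts_def)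
  ultimately show ?thesis unfolding contains_copy_def by (intro exI[of _ h]) simp
qed

lemma clique_embed:
  assumes G: "is_graph G" and K: "K \<subseteq> V" "finite K" "card K = card (verts G)"
    and cl: "\<forall>v\<in>K. \<forall>w\<in>K. v \<noteq> w \<longrightarrow> {v, w} \<in> E"
  shows "contains_copy (V, E) G"
proof -
  have fv: "finite (verts G)" using G is_graph_def by blast
  obtain f where f: "bij_betw f (verts G) K" using finite_same_card_bij[OF fv K(2)] K(3) by metis
  have "\<forall>e\<in>edges G. f ` e \<in> E"
  proof
    fix e assume "e \<in> edges G"
    then obtain u v where uv: "u \<in> verts G" "v \<in> verts G" "u \<noteq> v" "e = {u,v}" using G is_graph_def by metis
    have "f u \<noteq> f v" "f u \<in> K" "f v \<in> K" using f uv by (auto simp: bij_betw_def inj_on_def)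
    then show "f ` e \<in> E" using cl uv by auto
  qed
  moreover have "inj_on f (verts G)" "f ` verts G \<subseteq> V" using f K(1) by (auto simp: bij_betw_def)
  ultimately show ?thesis unfolding contains_copy_def by (intro exI[of _ f]) (simp add: verts_def edges_def)
qed

lemma ramsey_exists: assumes G: "is_graph G" shows "\<exists>F :: nat graph. is_graph F \<and> arrows F G G"
proof -
  obtain r where r: "\<forall>(V::nat set) (E::nat set set). finite V \<and> card V \<ge> r \<longrightarrow>
    (\<exists>R \<subseteq> V. card R = card (verts G) \<and> clique R E \<or> card R = card (verts G) \<and> indep R E)"
    using ramsey2 by blast
  define EF :: "nat set set" where "EF = {{u,v} | u v. u < r \<and> v < r \<and> u \<noteq> v}"
  define F :: "nat graph" where "F = ({..<r}, EF)"
  have vF: "verts F = {..<r}" and eF: "edges F = EF" by (simp_all add: F_def verts_def edges_def)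
  have pair: "{v, w} \<in> EF" if "v < r" "w < r" "v \<noteq> w" for v w
    unfolding EF_def using that by blast
  have "is_graph F"
    unfolding is_graph_def
  proof
    show "finite (verts F)" by (simp add: vF)
    show "\<forall>e\<in>edges F. \<exists>u v. u \<in> verts F \<and> v \<in> verts F \<and> u \<noteq> v \<and> e = {u, v}"
    proof
      fix e assume "e \<in> edges F"
      then obtain u v where "u < r" "v < r" "u \<noteq> v" "e = {u,v}" unfolding eF EF_def by blast
      then show "\<exists>u v. u \<in> verts F \<and> v \<in> verts F \<and> u \<noteq> v \<and> e = {u, v}" unfolding vF by blast
    qed
  qed
  moreover have "arrows F G G"
    unfolding arrows_def
  proof (intro allI impI)
    fix R assume R: "R \<subseteq> edges F"
    have "finite {..<r}" "card {..<r} \<ge> r" by simp_all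
    then have "\<exists>K \<subseteq> {..<r}. card K = card (verts G) \<and> clique K R \<or> card K = card (verts G) \<and> indep K R"
      using r by blast
    then obtain K where K: "K \<subseteq> {..<r}" "card K = card (verts G) \<and> clique K R \<or> card K = card (verts G) \<and> indep K R"
      by blast
    have fK: "finite K" using K(1) finite_subset by blast
    show "contains_copy (verts F, R) G \<or> contains_copy (verts F, edges F - R) G"
      using K(2)
    proof
      assume a: "card K = card (verts G) \<and> clique K R"
      have "contains_copy (verts F, R) G"
        using clique_embed[OF G, of K "verts F" R] K(1) fK a unfolding vF clique_def by blast
      then show ?thesis by blast
    next
      assume a: "card K = card (verts G) \<and> indep K R"
      have "\<forall>v\<in>K. \<forall>w\<in>K. v \<noteq> w \<longrightarrow> {v, w} \<in> edges F - R"
      proof (intro ballI impI)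
        fix v w assume "v \<in> K" "w \<in> K" "v \<noteq> w"
        then show "{v, w} \<in> edges F - R" using a K(1) pair unfolding indep_def eF by blast
      qed
      then have "contains_copy (verts F, edges F - R) G"
        using clique_embed[OF G, of K "verts F" "edges F - R"] K(1) fK a unfolding vF by blast
      then show ?thesis by blast
    qed
  qed
  ultimately show ?thesis by (intro exI[of _ F]) simp
qed
lemma arrows_nu: assumes G: "is_graph G" and A: "arrows F G G"
  shows "arrows F (matching_graph (matching_number G)) G"
proof -
  obtain M where M: "is_matching G M" "card M = matching_number G" using matching_exists[OF G] by blast
  have c: "contains_copy G (matching_graph (matching_number G))" using matching_copy[OF G M(1)] M(2) by simp
  show ?thesis using A contains_copy_trans[OF _ c] unfolding arrows_def by blast
qed

lemma size_ramsey_le: fixes F :: "nat graph" assumes "is_graph F" "arrows F H G" shows "size_ramsey H G \<le> card (edges F)"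
  unfolding size_ramsey_def apply (rule Least_le) using assms by blast

lemma size_ramsey_attained: assumes "\<exists>F :: nat graph. is_graph F \<and> arrows F H G"
  shows "\<exists>F :: nat graph. is_graph F \<and> card (edges F) = size_ramsey H G \<and> arrows F H G"
proof -
  let ?P = "\<lambda>m. \<exists>F :: nat graph. is_graph F \<and> card (edges F) = m \<and> arrows F H G"
  have "\<exists>m. ?P m" using assms by blast
  then have "?P (LEAST m. ?P m)" by (rule LeastI_ex)
  then show ?thesis unfolding size_ramsey_def by blast
qed


lemma verts_pair[simp]: "verts (V, E) = V" by (simp add: verts_def)
lemma edges_pair[simp]: "edges (V, E) = E" by (simp add: edges_def)

lemma mg_verts: "verts (matching_graph t) = {..<2*t}" by (simp add: matching_graph_def verts_def)
lemma mg_edges: "edges (matching_graph t) = {{2*i, 2*i+1} | i. i < t}" by (simp add: matching_graph_def edges_def)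

lemma red_copy_iff:
  "contains_copy (V, R) (matching_graph t) \<longleftrightarrow>
   (\<exists>h. inj_on h {..<2*t} \<and> h ` {..<2*t} \<subseteq> V \<and> (\<forall>i<t. {h (2*i), h (2*i+1)} \<in> R))"
proof
  assume "contains_copy (V, R) (matching_graph t)"
  then obtain h where h: "inj_on h {..<2*t}" "h ` {..<2*t} \<subseteq> V"
    "\<forall>e\<in>{{2*i, 2*i+1} | i. i < t}. h ` e \<in> R"
    unfolding contains_copy_def mg_verts mg_edges by (auto simp: verts_def edges_def)
  have "\<forall>i<t. {h (2*i), h (2*i+1)} \<in> R"
  proof (intro allI impI)
    fix i assume "i < t"
    then have "{2*i, 2*i+1} \<in> {{2*i, 2*i+1} | i. i < t}" by blast
    then have "h ` {2*i, 2*i+1} \<in> R" using h(3) by blast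
    then show "{h (2*i), h (2*i+1)} \<in> R" by simp
  qed
  then show "\<exists>h. inj_on h {..<2*t} \<and> h ` {..<2*t} \<subseteq> V \<and> (\<forall>i<t. {h (2*i), h (2*i+1)} \<in> R)"
    using h(1,2) by blast
next
  assume "\<exists>h. inj_on h {..<2*t} \<and> h ` {..<2*t} \<subseteq> V \<and> (\<forall>i<t. {h (2*i), h (2*i+1)} \<in> R)"
  then obtain h where h: "inj_on h {..<2*t}" "h ` {..<2*t} \<subseteq> V" "\<forall>i<t. {h (2*i), h (2*i+1)} \<in> R"
    by blast
  have "\<forall>e\<in>edges (matching_graph t). h ` e \<in> R"
  proof
    fix e assume "e \<in> edges (matching_graph t)"
    then obtain i where "i < t" "e = {2*i, 2*i+1}" unfolding mg_edges by blast
    then show "h ` e \<in> R" using h(3) by simp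
  qed
  then show "contains_copy (V, R) (matching_graph t)"
    unfolding contains_copy_def using h(1,2) by (intro exI[of _ h]) (simp add: matching_graph_def verts_def edges_def)
qed

lemma combine:
  fixes F1 F2 :: "nat graph"
  assumes g1: "is_graph F1" and a1: "arrows F1 (matching_graph a) G"
      and g2: "is_graph F2" and a2: "arrows F2 (matching_graph b) G"
  shows "\<exists>F :: nat graph. is_graph F \<and> card (edges F) = card (edges F1) + card (edges F2)
           \<and> arrows F (matching_graph (a+b)) G"
proof -
  have fv1: "finite (verts F1)" using g1 unfolding is_graph_def by blast
  have fv2: "finite (verts F2)" using g2 unfolding is_graph_def by blast
  define B where "B = Suc (Max (verts F1))"
  have B: "\<And>x. x \<in> verts F1 \<Longrightarrow> x < B" unfolding B_def using fv1 by (simp add: le_imp_less_Suc)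
  define s where "s = (\<lambda>x::nat. B + x)"
  have inj_s: "inj s" by (simp add: s_def inj_def)
  define V where "V = verts F1 \<union> s ` verts F2"
  define E2 where "E2 = (\<lambda>e. s ` e) ` edges F2"
  define E where "E = edges F1 \<union> E2"
  define F :: "nat graph" where "F = (V, E)"
  have vF: "verts F = V" and eF: "edges F = E" by (simp_all add: F_def verts_def edges_def)
  have injE: "inj_on (\<lambda>e. s ` e) (edges F2)"
    unfolding inj_on_def using inj_image_eq_iff[OF inj_s] by blast
  have ed1: "\<And>e. e \<in> edges F1 \<Longrightarrow> \<exists>u v. u \<in> verts F1 \<and> v \<in> verts F1 \<and> u \<noteq> v \<and> e = {u, v}"
    using g1 unfolding is_graph_def by blast
  have ed2: "\<And>e. e \<in> edges F2 \<Longrightarrow> \<exists>u v. u \<in> verts F2 \<and> v \<in> verts F2 \<and> u \<noteq> v \<and> e = {u, v}"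
    using g2 unfolding is_graph_def by blast
  have disj: "edges F1 \<inter> E2 = {}"
  proof (rule ccontr)
    assume "edges F1 \<inter> E2 \<noteq> {}"
    then obtain e where e1: "e \<in> edges F1" and e2: "e \<in> E2" by blast
    obtain u v where uv: "u \<in> verts F1" "e = {u, v}" using ed1[OF e1] by blast
    have "u < B" using B uv by blast
    moreover have "\<forall>x\<in>e. B \<le> x" using e2 unfolding E2_def s_def by auto
    ultimately show False using uv by auto
  qed
  have fe1: "finite (edges F1)" using finite_edges[OF g1] .
  have fE2: "finite E2" unfolding E2_def using finite_edges[OF g2] by simp
  have cardE: "card E = card (edges F1) + card (edges F2)"
  proof -
    have "card E = card (edges F1) + card E2" unfolding E_def using fe1 fE2 disj by (rule card_Un_disjoint)
    moreover have "card E2 = card (edges F2)" unfolding E2_def using injE by (rule card_image)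
    ultimately show ?thesis by simp
  qed
  have isg: "is_graph F"
    unfolding is_graph_def
  proof
    show "finite (verts F)" unfolding vF V_def using fv1 fv2 by simp
    show "\<forall>e\<in>edges F. \<exists>u v. u \<in> verts F \<and> v \<in> verts F \<and> u \<noteq> v \<and> e = {u, v}"
    proof
      fix e assume "e \<in> edges F"
      then have "e \<in> edges F1 \<or> e \<in> E2" unfolding eF E_def by blast
      then show "\<exists>u v. u \<in> verts F \<and> v \<in> verts F \<and> u \<noteq> v \<and> e = {u, v}"
      proof
        assume "e \<in> edges F1"
        then obtain u v where "u \<in> verts F1" "v \<in> verts F1" "u \<noteq> v" "e = {u, v}" using ed1 by blast
        then show ?thesis unfolding vF V_def by blast
      next
        assume "e \<in> E2"
        then obtain e' where e': "e' \<in> edges F2" "e = s ` e'" unfolding E2_def by blast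
        then obtain u v where uv: "u \<in> verts F2" "v \<in> verts F2" "u \<noteq> v" "e' = {u, v}" using ed2 by blast
        have "s u \<in> verts F" "s v \<in> verts F" using uv unfolding vF V_def by auto
        moreover have "s u \<noteq> s v" using uv by (simp add: s_def)
        moreover have "e = {s u, s v}" using e' uv by simp
        ultimately show ?thesis by blast
      qed
    qed
  qed
  have arr: "arrows F (matching_graph (a+b)) G"
    unfolding arrows_def
  proof (intro allI impI)
    fix R assume R: "R \<subseteq> edges F"
    define R1 where "R1 = R \<inter> edges F1"
    define R2 where "R2 = {e \<in> edges F2. s ` e \<in> R}"
    have c1: "contains_copy (verts F1, R1) (matching_graph a) \<or> contains_copy (verts F1, edges F1 - R1) G"
      using a1[unfolded arrows_def, rule_format, of R1] unfolding R1_def by simp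
    have c2: "contains_copy (verts F2, R2) (matching_graph b) \<or> contains_copy (verts F2, edges F2 - R2) G"
      using a2[unfolded arrows_def, rule_format, of R2] unfolding R2_def by simp
    have blue1: "contains_copy (verts F, edges F - R) G" if "contains_copy (verts F1, edges F1 - R1) G"
      by (rule contains_copy_mono[OF that]) (auto simp: vF eF V_def E_def R1_def)
    have blue2: "contains_copy (verts F, edges F - R) G" if "contains_copy (verts F2, edges F2 - R2) G"
    proof -
      have "\<forall>e\<in>edges (verts F2, edges F2 - R2). s ` e \<in> edges F - R"
        unfolding eF E_def E2_def R2_def by (auto simp: edges_def)
      moreover have "s ` verts (verts F2, edges F2 - R2) \<subseteq> verts F" unfolding vF V_def by (auto simp: verts_def)
      moreover have "inj_on s (verts (verts F2, edges F2 - R2))" using inj_s by (simp add: inj_on_def inj_def)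
      ultimately have "contains_copy (verts F, edges F - R) (verts F2, edges F2 - R2)"
        unfolding contains_copy_def by (intro exI[of _ s]) simp
      then show ?thesis using contains_copy_trans that by metis
    qed
    show "contains_copy (verts F, R) (matching_graph (a+b)) \<or> contains_copy (verts F, edges F - R) G"
    proof (cases "contains_copy (verts F, edges F - R) G")
      case True then show ?thesis by blast
    next
      case False
      then have r1: "contains_copy (verts F1, R1) (matching_graph a)"
        and r2: "contains_copy (verts F2, R2) (matching_graph b)" using c1 c2 blue1 blue2 by metis+
      obtain h1 where h1: "inj_on h1 {..<2*a}" "h1 ` {..<2*a} \<subseteq> verts F1" "\<forall>i<a. {h1 (2*i), h1 (2*i+1)} \<in> R1"
        using r1 unfolding red_copy_iff by blast
      obtain h2 where h2: "inj_on h2 {..<2*b}" "h2 ` {..<2*b} \<subseteq> verts F2" "\<forall>i<b. {h2 (2*i), h2 (2*i+1)} \<in> R2"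
        using r2 unfolding red_copy_iff by blast
      define h where "h j = (if j < 2*a then h1 j else s (h2 (j - 2*a)))" for j
      have "inj_on h {..<2*(a+b)}"
      proof
        fix j k assume j: "j \<in> {..<2*(a+b)}" and k: "k \<in> {..<2*(a+b)}" and eq: "h j = h k"
        show "j = k"
        proof (cases "j < 2*a")
          case jT: True
          show ?thesis
          proof (cases "k < 2*a")
            case True
            then show ?thesis using jT eq h1(1) unfolding h_def inj_on_def by simp
          next
            case False
            have "h1 j < B" using B h1(2) jT by blast
            moreover have "B \<le> h k" using False unfolding h_def s_def by simp
            ultimately show ?thesis using eq jT unfolding h_def by simp
          qed
        next
          case jF: False
          show ?thesis
          proof (cases "k < 2*a")
            case True
            have "h1 k < B" using B h1(2) True by blast
            moreover have "B \<le> h j" using jF unfolding h_def s_def by simp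
            ultimately show ?thesis using eq True unfolding h_def by simp
          next
            case False
            have "h2 (j - 2*a) = h2 (k - 2*a)" using eq jF False unfolding h_def s_def by simp
            moreover have "j - 2*a \<in> {..<2*b}" "k - 2*a \<in> {..<2*b}" using j k jF False by auto
            ultimately have "j - 2*a = k - 2*a" using h2(1) unfolding inj_on_def by blast
            then show ?thesis using jF False by simp
          qed
        qed
      qed
      moreover have "h ` {..<2*(a+b)} \<subseteq> V"
      proof
        fix x assume "x \<in> h ` {..<2*(a+b)}"
        then obtain j where j: "j < 2*(a+b)" "x = h j" by blast
        show "x \<in> V"
        proof (cases "j < 2*a")
          case True then show ?thesis using h1(2) j unfolding h_def V_def by auto
        next
          case False
          then have "j - 2*a < 2*b" using j by simp
          then have "h2 (j - 2*a) \<in> verts F2" using h2(2) by blast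
          then show ?thesis using False j unfolding h_def V_def by simp
        qed
      qed
      moreover have "\<forall>i<a+b. {h (2*i), h (2*i+1)} \<in> R"
      proof (intro allI impI)
        fix i assume i: "i < a + b"
        show "{h (2*i), h (2*i+1)} \<in> R"
        proof (cases "i < a")
          case True
          then have "{h (2*i), h (2*i+1)} = {h1 (2*i), h1 (2*i+1)}" unfolding h_def by simp
          then show ?thesis using h1(3) True unfolding R1_def by simp
        next
          case False
          define l where "l = i - a"
          have l: "l < b" using i False unfolding l_def by simp
          have "2*i - 2*a = 2*l" "2*i + 1 - 2*a = 2*l+1" using False unfolding l_def by simp_all
          then have "{h (2*i), h (2*i+1)} = s ` {h2 (2*l), h2 (2*l+1)}" using False unfolding h_def by simp
          then show ?thesis using h2(3) l unfolding R2_def by simp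
        qed
      qed
      ultimately have "contains_copy (V, R) (matching_graph (a+b))"
        unfolding red_copy_iff by (intro exI[of _ h]) simp
      then show ?thesis unfolding vF by blast
    qed
  qed
  show ?thesis using isg cardE arr by (intro exI[of _ F]) (simp add: eF)
qed


lemma attained_GG:
  assumes G: "is_graph G"
  obtains F0 :: "nat graph" where "is_graph F0" "card (edges F0) = size_ramsey G G" "arrows F0 G G"
  using size_ramsey_attained[OF ramsey_exists[OF G]] by blast

lemma part1:
  assumes G: "is_graph G"
  shows "size_ramsey (matching_graph (matching_number G)) G \<le> size_ramsey G G"
proof -
  obtain F0 :: "nat graph" where F0: "is_graph F0" "card (edges F0) = size_ramsey G G" "arrows F0 G G"
    using attained_GG[OF G] by blast
  have "arrows F0 (matching_graph (matching_number G)) G" using arrows_nu[OF G F0(3)] .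
  then show ?thesis using size_ramsey_le[OF F0(1)] F0(2) by metis
qed

lemma multiple:
  assumes G: "is_graph G"
  shows "size_ramsey (matching_graph (Suc k * matching_number G)) G \<le> Suc k * size_ramsey G G"
proof -
  obtain F0 :: "nat graph" where F0: "is_graph F0" "card (edges F0) = size_ramsey G G" "arrows F0 G G"
    using attained_GG[OF G] by blast
  have A0: "arrows F0 (matching_graph (matching_number G)) G" using arrows_nu[OF G F0(3)] .
  have "\<exists>F :: nat graph. is_graph F \<and> card (edges F) = Suc k * size_ramsey G G
           \<and> arrows F (matching_graph (Suc k * matching_number G)) G"
  proof (induction k)
    case 0
    then show ?case using F0 A0 by (intro exI[of _ F0]) simp
  next
    case (Suc k)
    then obtain Fk :: "nat graph" where Fk: "is_graph Fk" "card (edges Fk) = Suc k * size_ramsey G G"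
      "arrows Fk (matching_graph (Suc k * matching_number G)) G" by blast
    obtain F :: "nat graph" where F: "is_graph F" "card (edges F) = card (edges F0) + card (edges Fk)"
      "arrows F (matching_graph (matching_number G + Suc k * matching_number G)) G"
      using combine[OF F0(1) A0 Fk(1) Fk(3)] by blast
    have "card (edges F) = Suc (Suc k) * size_ramsey G G" using F(2) F0(2) Fk(2) by simp
    moreover have "matching_number G + Suc k * matching_number G = Suc (Suc k) * matching_number G" by simp
    ultimately show ?case using F(1,3) by (intro exI[of _ F]) simp
  qed
  then obtain F :: "nat graph" where F: "is_graph F" "card (edges F) = Suc k * size_ramsey G G"
    "arrows F (matching_graph (Suc k * matching_number G)) G" by blast
  show ?thesis using size_ramsey_le[OF F(1) F(3)] F(2) by simp
qed

theorem proposition4p1: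
  fixes G :: "'a graph"
  assumes "is_graph G" and "edges G \<noteq> {}"
  shows "size_ramsey (matching_graph (matching_number G)) G \<le> size_ramsey G G
    \<and> (convergent (\<lambda>t. real (size_ramsey (matching_graph t) G) / (real t * real (card (edges G))))
       \<longrightarrow> size_ramsey_infty G \<le> real (size_ramsey G G) / (real (matching_number G) * real (card (edges G))))"
proof (intro conjI impI)
  show "size_ramsey (matching_graph (matching_number G)) G \<le> size_ramsey G G" using part1[OF assms(1)] .
next
  define X where "X t = real (size_ramsey (matching_graph t) G) / (real t * real (card (edges G)))" for t
  define \<nu> where "\<nu> = matching_number G"
  define c where "c = real (size_ramsey G G) / (real \<nu> * real (card (edges G)))"
  assume "convergent (\<lambda>t. real (size_ramsey (matching_graph t) G) / (real t * real (card (edges G))))"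
  then have cv: "convergent X" unfolding X_def .
  have nu: "\<nu> \<ge> 1" unfolding \<nu>_def using matching_number_pos[OF assms] .
  have cE: "card (edges G) > 0" using assms finite_edges[OF assms(1)] card_gt_0_iff by blast
  have lim: "X \<longlonglongrightarrow> lim X" using cv convergent_LIMSEQ_iff by blast
  have sm: "strict_mono (\<lambda>k. Suc k * \<nu>)" using nu by (auto simp: strict_mono_def)
  have lim2: "(X \<circ> (\<lambda>k. Suc k * \<nu>)) \<longlonglongrightarrow> lim X" using LIMSEQ_subseq_LIMSEQ[OF lim sm] .
  have bound: "(X \<circ> (\<lambda>k. Suc k * \<nu>)) k \<le> c" for k
  proof -
    have m: "real (size_ramsey (matching_graph (Suc k * \<nu>)) G) \<le> real (Suc k) * real (size_ramsey G G)"
      using multiple[OF assms(1), of k] unfolding \<nu>_def by (metis of_nat_le_iff of_nat_mult)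
    have "Suc k * \<nu> > 0" using nu by simp
    then have pos: "real (Suc k * \<nu>) * real (card (edges G)) > 0" using cE by (intro mult_pos_pos) (simp_all only: of_nat_0_less_iff)
    have "X (Suc k * \<nu>) \<le> real (Suc k) * real (size_ramsey G G) / (real (Suc k * \<nu>) * real (card (edges G)))"
      unfolding X_def using m pos by (simp add: divide_right_mono)
    also have "\<dots> = real (Suc k) * real (size_ramsey G G) / (real (Suc k) * (real \<nu> * real (card (edges G))))" by (simp only: of_nat_mult mult.assoc)
    also have "\<dots> = c" unfolding c_def by (rule nonzero_mult_divide_mult_cancel_left) simp
    finally show ?thesis by simp
  qed
  have "lim X \<le> c" using LIMSEQ_le_const2[OF lim2] bound by blast
  then show "size_ramsey_infty G \<le> real (size_ramsey G G) / (real (matching_number G) * real (card (edges G)))"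
    unfolding size_ramsey_infty_def c_def \<nu>_def X_def by simp
qed

end
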